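(* For every $t\in(0,1)$, every $h>0$ and every nonnegative integer $n$, with $a=t/h$ and $b=(1-t)/h$, $$\sum_{k\ge0} B^{n-k}_k(t;h) = \int_0^1 \frac{x^{a-1}(1-x)^{b-1}}{(1+x)\,\mathrm{B}(a,b)}\,dx + (-1)^{n+2}\int_0^1 \frac{x^{a+n}(1-x)^{b-1}}{(1+x)\,\mathrm{B}(a,b)}\,dx,$$ where $\mathrm{B}(a,b)$ is the Beta function.
   Context: For $h\ge 0$, the $h$-Bernstein polynomials are $$B^m_k(t;h) = \binom{m}{k}\frac{\prod_{i=0}^{k-1}(t+ih)\prod_{i=0}^{m-k-1}(1-t+ih)}{\prod_{i=0}^{m-1}(1+ih)}$$ for integers $0\le k\le m$ (empty products equal $1$), and $B^m_k(t;h)=0$ for $m<k$. *)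

theory Defs
  imports "HOL-Analysis.Analysis"
begin

definition hBernstein :: "nat \<Rightarrow> nat \<Rightarrow> real \<Rightarrow> real \<Rightarrow> real" where
  "hBernstein m k t h =
     (if m < k then 0
      else real (m choose k) *
           (\<Prod>i<k. t + real i * h) * (\<Prod>i<m - k. 1 - t + real i * h) /
           (\<Prod>i<m. 1 + real i * h))"

end

theory Submission
  imports Defs
begin


definition TT :: "nat \<Rightarrow> real \<Rightarrow> real" where
  "TT n x = (\<Sum>k\<le>n. real ((n - k) choose k) * x ^ k * (1 - x) ^ (n - 2 * k))"

lemma TT_rec: "TT (Suc (Suc n)) x = (1 - x) * TT (Suc n) x + x * TT n x"
proof -
  define y where "y = 1 - x"
  have A: "TT (Suc (Suc n)) x = y ^ (n+2) + (\<Sum>k\<le>Suc n. real ((n + 1 - k) choose (k + 1)) * x ^ (k+1) * y ^ (n - 2 * k))"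
    unfolding TT_def y_def by (subst sum.atMost_Suc_shift) simp
  have B: "real ((n + 1 - k) choose (k + 1)) = real ((n - k) choose (k + 1)) + real ((n - k) choose k)" if "k \<le> Suc n" for k
  proof (cases "k \<le> n")
    case True
    then have "n + 1 - k = Suc (n - k)" by simp
    then show ?thesis by simp
  next
    case False
    then have "k = Suc n" using that by simp
    then show ?thesis by simp
  qed
  have C: "(\<Sum>k\<le>Suc n. real ((n - k) choose k) * x ^ (k+1) * y ^ (n - 2 * k)) = x * TT n x"
    unfolding TT_def y_def by (simp add: sum_distrib_left mult_ac)
  have D: "y ^ (n+2) + (\<Sum>k\<le>Suc n. real ((n - k) choose (k + 1)) * x ^ (k+1) * y ^ (n - 2 * k)) = y * TT (Suc n) x"
  proof -
    have "y * TT (Suc n) x = y * (y ^ (n+1) + (\<Sum>k\<le>n. real ((n - k) choose (k + 1)) * x ^ (k+1) * y ^ (n - 1 - 2 * k)))"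
      unfolding TT_def y_def by (subst sum.atMost_Suc_shift) (simp add: numeral_2_eq_2)
    also have "\<dots> = y ^ (n+2) + (\<Sum>k\<le>n. real ((n - k) choose (k + 1)) * x ^ (k+1) * y ^ (n - 2 * k))"
    proof -
      have "(\<Sum>k\<le>n. y * (real ((n - k) choose (k + 1)) * x ^ (k+1) * y ^ (n - 1 - 2 * k))) =
            (\<Sum>k\<le>n. real ((n - k) choose (k + 1)) * x ^ (k+1) * y ^ (n - 2 * k))"
      proof (intro sum.cong refl)
        fix k assume "k \<in> {..n}"
        show "y * (real ((n - k) choose (k + 1)) * x ^ (k+1) * y ^ (n - 1 - 2 * k)) =
           real ((n - k) choose (k + 1)) * x ^ (k+1) * y ^ (n - 2 * k)"
        proof (cases "Suc k \<le> n - k")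
          case True
          then have "n - 2 * k = Suc (n - 1 - 2 * k)" by simp
          then show ?thesis by simp
        qed simp
      qed
      then show ?thesis by (simp add: distrib_left sum_distrib_left)
    qed
    also have "(\<Sum>k\<le>n. real ((n - k) choose (k + 1)) * x ^ (k+1) * y ^ (n - 2 * k)) = 
       (\<Sum>k\<le>Suc n. real ((n - k) choose (k + 1)) * x ^ (k+1) * y ^ (n - 2 * k))" by simp
    finally show ?thesis by simp
  qed
  have "TT (Suc (Suc n)) x = y ^ (n+2) + (\<Sum>k\<le>Suc n. real ((n - k) choose (k + 1)) * x ^ (k+1) * y ^ (n - 2 * k))
      + (\<Sum>k\<le>Suc n. real ((n - k) choose k) * x ^ (k+1) * y ^ (n - 2 * k))"
    unfolding A add.assoc sum.distrib[symmetric]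
  proof (intro arg_cong2[where f="(+)"] refl sum.cong)
    fix k assume "k \<in> {..Suc n}"
    then show "real ((n + 1 - k) choose (k + 1)) * x ^ (k+1) * y ^ (n - 2 * k) =
      real ((n - k) choose (k + 1)) * x ^ (k+1) * y ^ (n - 2 * k) + real ((n - k) choose k) * x ^ (k+1) * y ^ (n - 2 * k)"
      using B[of k] by (simp only: distrib_right[symmetric]) simp
  qed
  then show ?thesis using C D y_def by simp
qed

lemma TT_closed: "(1 + x) * TT n x = 1 - (- x) ^ (n + 1)"
proof (induction n rule: less_induct)
  case (less n)
  show ?case
  proof (cases n)
    case 0 then show ?thesis by (simp add: TT_def)
  next
    case (Suc m)
    show ?thesis
    proof (cases m)
      case 0 then show ?thesis using Suc by (simp add: TT_def algebra_simps power2_eq_square)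
    next
      case (Suc p)
      have "(1 + x) * TT n x = (1 - x) * ((1 + x) * TT (Suc p) x) + x * ((1 + x) * TT p x)"
        using \<open>n = Suc m\<close> Suc by (simp add: TT_rec algebra_simps)
      also have "\<dots> = (1 - x) * (1 - (- x) ^ (p + 2)) + x * (1 - (-x) ^ (p+1))"
        using less \<open>n = Suc m\<close> Suc by simp
      also have "\<dots> = 1 - (- x) ^ (n + 1)"
        using \<open>n = Suc m\<close> Suc by (simp add: algebra_simps)
      finally show ?thesis .
    qed
  qed
qed


lemma Gamma_poch: "(z::real) > 0 \<Longrightarrow> Gamma (z + real n) = pochhammer z n * Gamma z"
proof -
  assume z: "z > 0"
  have "rGamma z = pochhammer z n * rGamma (z + of_nat n)" by (rule pochhammer_rGamma)
  moreover have "rGamma z \<noteq> 0" "rGamma (z + real n) \<noteq> 0" using z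
    by (auto simp: rGamma_eq_zero_iff nonpos_Ints_def)
  ultimately show ?thesis by (simp add: Gamma_def field_simps)
qed

lemma Beta_ratio:
  assumes "(a::real) > 0" "b > 0"
  shows "Beta (a + real k) (b + real j) = Beta a b * pochhammer a k * pochhammer b j / pochhammer (a + b) (k + j)"
proof -
  have e: "Gamma (a + real k + (b + real j)) = pochhammer (a+b) (k+j) * Gamma (a+b)"
    using Gamma_poch[of "a+b" "k+j"] assms by (simp add: add_ac)
  have "Gamma (a + real k) = pochhammer a k * Gamma a" "Gamma (b + real j) = pochhammer b j * Gamma b"
    using assms by (simp_all add: Gamma_poch)
  moreover note e
  moreover have "pochhammer (a+b) (k+j) > 0" "Gamma a > 0" "Gamma b > 0" "Gamma (a+b) > 0"
    using assms by (auto intro!: pochhammer_pos Gamma_real_pos)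
  ultimately show ?thesis using assms unfolding Beta_def
    by (simp add: field_simps)
qed

lemma prod_h: "(h::real) > 0 \<Longrightarrow> (\<Prod>i<k. t + real i * h) = h ^ k * pochhammer (t / h) k"
proof -
  assume h: "h > 0"
  have "(\<Prod>i<k. t + real i * h) = (\<Prod>i<k. h * (t / h + real i))"
    using h by (intro prod.cong) (auto simp: field_simps)
  also have "\<dots> = h ^ k * pochhammer (t / h) k"
    by (simp add: prod.distrib pochhammer_prod atLeast0LessThan)
  finally show ?thesis .
qed

lemma Beta_pos: "(a::real) > 0 \<Longrightarrow> b > 0 \<Longrightarrow> Beta a b > 0"
  unfolding Beta_def by (intro divide_pos_pos mult_pos_pos Gamma_real_pos) auto

lemma hB_Beta:
  assumes "0 < t" "t < 1" "0 < h" "k \<le> m"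
  shows "hBernstein m k t h = real (m choose k) * Beta (t/h + real k) ((1-t)/h + real (m-k)) / Beta (t/h) ((1-t)/h)"
proof -
  have a: "t/h > 0" and b: "(1-t)/h > 0" using assms by auto
  have ab: "t/h + (1-t)/h = 1/h" using assms by (simp add: field_simps)
  have p1: "(\<Prod>i<m. 1 + real i * h) = h ^ m * pochhammer (1/h) m" using prod_h[OF assms(3)] by simp
  have pp: "pochhammer (1/h) m > 0" using assms by (intro pochhammer_pos) auto
  have hm: "h ^ m = h ^ k * h ^ (m - k)" using assms(4) by (simp flip: power_add)
  have B0: "Beta (t/h) ((1-t)/h) > 0" using a b by (rule Beta_pos)
  have e1: "(\<Prod>i<k. t + real i * h) = h ^ k * pochhammer (t/h) k" by (rule prod_h[OF assms(3)])
  have e2: "(\<Prod>i<m-k. 1 - t + real i * h) = h ^ (m-k) * pochhammer ((1-t)/h) (m-k)" by (rule prod_h[OF assms(3)])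
  have e3: "Beta (t/h + real k) ((1-t)/h + real (m-k)) = Beta (t/h) ((1-t)/h) * pochhammer (t/h) k * pochhammer ((1-t)/h) (m-k) / pochhammer (1/h) m"
    using Beta_ratio[OF a b, of k "m-k"] assms(4) by (simp add: ab)
  have "hBernstein m k t h = real (m choose k) * (h ^ k * pochhammer (t/h) k) * (h ^ (m-k) * pochhammer ((1-t)/h) (m-k)) / (h ^ m * pochhammer (1/h) m)"
    unfolding hBernstein_def e1 e2 p1 using assms(4) by simp
  also have "\<dots> = real (m choose k) * Beta (t/h + real k) ((1-t)/h + real (m-k)) / Beta (t/h) ((1-t)/h)"
    unfolding e3 hm using pp B0 assms(3) by (simp add: field_simps)
  finally show ?thesis .
qed



lemma powr_shift: "(x::real) \<ge> 0 \<Longrightarrow> x ^ k * x powr c = x powr (c + real k)"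
proof (cases "x = 0")
  case True
  then show ?thesis by simp
next
  case False
  assume "x \<ge> 0"
  then have "x > 0" using False by simp
  then show ?thesis by (simp add: powr_add powr_realpow)
qed

lemma int_kj:
  assumes "(a::real) > 0" "b > 0"
  shows "((\<lambda>x. x ^ k * (1 - x) ^ j * (x powr (a - 1) * (1 - x) powr (b - 1))) has_integral Beta (a + real k) (b + real j)) {0..1}"
proof -
  have hb: "((\<lambda>x. x powr (a + real k - 1) * (1 - x) powr (b + real j - 1)) has_integral Beta (a + real k) (b + real j)) {0..1}"
    using assms by (intro has_integral_Beta_real) auto
  have eq: "x ^ k * (1 - x) ^ j * (x powr (a - 1) * (1 - x) powr (b - 1)) = x powr (a + real k - 1) * (1 - x) powr (b + real j - 1)"
    if "x \<in> {0..1}" for x :: real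
  proof -
    have x: "0 \<le> x" "x \<le> 1" using that by auto
    have e1: "x ^ k * x powr (a - 1) = x powr (a - 1 + real k)" by (rule powr_shift[OF x(1)])
    have "0 \<le> 1 - x" using x by simp
    have e2: "(1 - x) ^ j * (1 - x) powr (b - 1) = (1 - x) powr (b - 1 + real j)" by (rule powr_shift[OF \<open>0 \<le> 1 - x\<close>])
    have e3: "a - 1 + real k = a + real k - 1" "b - 1 + real j = b + real j - 1" by simp_all
    have "x ^ k * (1 - x) ^ j * (x powr (a - 1) * (1 - x) powr (b - 1)) = (x ^ k * x powr (a - 1)) * ((1 - x) ^ j * (1 - x) powr (b - 1))"
      by (simp only: mult_ac)
    also have "\<dots> = x powr (a + real k - 1) * (1 - x) powr (b + real j - 1)"
      unfolding e1 e2 e3 ..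
    finally show ?thesis .
  qed
  show ?thesis by (rule has_integral_eq[OF _ hb], rule eq[symmetric])
qed


lemma m0: "(\<lambda>x::real. x powr (a - 1) * (1 - x) powr (b - 1) / ((1 + x) * B)) \<in> borel_measurable lborel"
  by (intro borel_measurable_divide borel_measurable_times powr_real_measurable) auto
lemma meas1: "set_borel_measurable lborel {0..1} (\<lambda>x::real. x powr (a - 1) * (1 - x) powr (b - 1) / ((1 + x) * B))"
  unfolding set_borel_measurable_def by (intro borel_measurable_scaleR borel_measurable_indicator m0) auto


theorem mainTheorem20:
  fixes t h :: real and n :: nat
  assumes "0 < t" "t < 1" "0 < h"
  defines "a \<equiv> t / h" and "b \<equiv> (1 - t) / h"
  shows "(\<Sum>k\<le>n. hBernstein (n - k) k t h) =
           (LBINT x=0..1. x powr (a - 1) * (1 - x) powr (b - 1) / ((1 + x) * Beta a b))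
         + (-1) ^ (n + 2) *
           (LBINT x=0..1. x powr (a + real n) * (1 - x) powr (b - 1) / ((1 + x) * Beta a b))"
proof -
  have a: "a > 0" and b: "b > 0" using assms by (auto simp: a_def b_def)
  define B where "B = Beta a b"
  have B: "B > 0" unfolding B_def using a b by (rule Beta_pos)
  define w where "w = (\<lambda>x::real. x powr (a - 1) * (1 - x) powr (b - 1))"
  define g1 where "g1 = (\<lambda>x::real. x powr (a - 1) * (1 - x) powr (b - 1) / ((1 + x) * Beta a b))"
  define g2 where "g2 = (\<lambda>x::real. x powr (a + real n) * (1 - x) powr (b - 1) / ((1 + x) * Beta a b))"
  have LHS: "(\<Sum>k\<le>n. hBernstein (n - k) k t h) =
     (\<Sum>k\<le>n. real ((n - k) choose k) * Beta (a + real k) (b + real (n - 2 * k)) / B)"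
  proof (intro sum.cong refl)
    fix k assume "k \<in> {..n}"
    show "hBernstein (n - k) k t h = real ((n - k) choose k) * Beta (a + real k) (b + real (n - 2 * k)) / B"
    proof (cases "k \<le> n - k")
      case True
      have "n - k - k = n - 2 * k" by simp
      then show ?thesis using hB_Beta[OF assms(1-3) True] by (simp add: a_def b_def B_def)
    next
      case False
      then show ?thesis by (simp add: hBernstein_def)
    qed
  qed
  have HI: "((\<lambda>x. \<Sum>k\<le>n. real ((n - k) choose k) / B * (x ^ k * (1 - x) ^ (n - 2 * k) * w x)) has_integral
       (\<Sum>k\<le>n. real ((n - k) choose k) / B * Beta (a + real k) (b + real (n - 2 * k)))) {0..1}"
    unfolding w_def by (intro has_integral_sum finite_atMost has_integral_mult_right int_kj a b)
  have eqf: "(\<Sum>k\<le>n. real ((n - k) choose k) / B * (x ^ k * (1 - x) ^ (n - 2 * k) * w x)) = g1 x + (-1) ^ (n + 2) * g2 x"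
    if x: "x \<in> {0..1}" for x :: real
  proof -
    have x0: "x \<ge> 0" using x by auto
    have "(\<Sum>k\<le>n. real ((n - k) choose k) / B * (x ^ k * (1 - x) ^ (n - 2 * k) * w x)) = TT n x * w x / B"
      unfolding TT_def sum_distrib_right sum_divide_distrib by (intro sum.cong refl) (simp add: mult_ac)
    also have "TT n x = (1 - (- x) ^ (n + 1)) / (1 + x)" using TT_closed[of x n] x0
      by (simp add: field_simps)
    also have "(1 - (- x) ^ (n + 1)) / (1 + x) * w x / B = w x / ((1 + x) * B) + (-1) ^ (n + 2) * (x ^ (n+1) * w x) / ((1 + x) * B)"
    proof -
      have m: "(- x) ^ (n + 1) = - ((-1) ^ (n + 2) * x ^ (n+1))"
        by (simp add: power_minus[of x])
      have "(1 - (- x) ^ (n + 1)) / (1 + x) * w x / B = (w x + (-1) ^ (n + 2) * (x ^ (n+1) * w x)) / ((1 + x) * B)"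
        unfolding m by (simp add: algebra_simps)
      also have "\<dots> = w x / ((1 + x) * B) + (-1) ^ (n + 2) * (x ^ (n+1) * w x) / ((1 + x) * B)"
        by (rule add_divide_distrib)
      finally show ?thesis .
    qed
    also have "x ^ (n+1) * w x = x powr (a + real n) * (1 - x) powr (b - 1)"
      unfolding w_def using powr_shift[OF x0, of "n+1" "a-1"] by (simp add: mult.assoc)
    finally show ?thesis unfolding g1_def g2_def w_def B_def by simp
  qed
  have m1: "set_borel_measurable lborel {0..1} g1" unfolding g1_def
    unfolding set_borel_measurable_def
    by (intro borel_measurable_scaleR borel_measurable_indicator borel_measurable_divide borel_measurable_times powr_real_measurable) auto
  have m2: "set_borel_measurable lborel {0..1} g2" unfolding g2_def
    unfolding set_borel_measurable_def
    by (intro borel_measurable_scaleR borel_measurable_indicator borel_measurable_divide borel_measurable_times powr_real_measurable) auto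
  have wi: "set_integrable lborel {0..1} (\<lambda>x. w x / B)"
    unfolding w_def by (intro set_integrable_divide integrable_Beta a b)
  have g1le: "norm (g1 x) \<le> norm (w x / B)" if "x \<in> {0..1}" for x
  proof -
    have "w x \<ge> 0" unfolding w_def by simp
    moreover have "1 + x \<ge> 1" using that by simp
    ultimately have wle: "w x * 1 \<le> w x * (1 + x)" by (intro mult_left_mono) auto
    have "w x / ((1 + x) * B) \<le> w x / B" using B wle that
      by (simp add: divide_simps)
    moreover have "w x / ((1 + x) * B) \<ge> 0" using \<open>w x \<ge> 0\<close> B that by simp
    moreover have "g1 x = w x / ((1 + x) * B)" unfolding g1_def w_def B_def by simp
    moreover have "w x / B \<ge> 0" using \<open>w x \<ge> 0\<close> B by simp
    ultimately show ?thesis by (simp only: real_norm_def abs_of_nonneg)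
  qed
  have g2le: "norm (g2 x) \<le> norm (w x / B)" if "x \<in> {0..1}" for x
  proof -
    have x0: "x \<ge> 0" "x \<le> 1" using that by auto
    have "g2 x = x ^ (n+1) * g1 x"
      unfolding g1_def g2_def using powr_shift[OF x0(1), of "n+1" "a-1"] by simp
    moreover have "x ^ (n+1) \<le> 1" using x0 by (intro power_le_one)
    moreover have "g1 x \<ge> 0" unfolding g1_def using B x0 by (simp add: B_def)
    ultimately have "norm (g2 x) \<le> norm (g1 x)" using x0 by (simp add: mult_left_le_one_le)
    then show ?thesis using g1le[OF that] by simp
  qed
  have i1: "set_integrable lborel {0..1} g1"
    by (rule set_integrable_bound[OF wi m1]) (use g1le in auto)
  have i2: "set_integrable lborel {0..1} g2"
    by (rule set_integrable_bound[OF wi m2]) (use g2le in auto)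
  have L1: "(LBINT x=0..1. g1 x) = integral {0..1} g1"
    using interval_integral_eq_integral[of 0 1 g1] i1 by (simp add: zero_ereal_def one_ereal_def)
  have L2: "(LBINT x=0..1. g2 x) = integral {0..1} g2"
    using interval_integral_eq_integral[of 0 1 g2] i2 by (simp add: zero_ereal_def one_ereal_def)
  have h1: "(g1 has_integral integral {0..1} g1) {0..1}"
    using set_borel_integral_eq_integral(1)[OF i1] by (simp add: integrable_integral)
  have h2: "(g2 has_integral integral {0..1} g2) {0..1}"
    using set_borel_integral_eq_integral(1)[OF i2] by (simp add: integrable_integral)
  have "((\<lambda>x. g1 x + (-1) ^ (n + 2) * g2 x) has_integral (integral {0..1} g1 + (-1) ^ (n + 2) * integral {0..1} g2)) {0..1}"
    by (intro has_integral_add has_integral_mult_right h1 h2)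
  moreover have "((\<lambda>x. g1 x + (-1) ^ (n + 2) * g2 x) has_integral
       (\<Sum>k\<le>n. real ((n - k) choose k) / B * Beta (a + real k) (b + real (n - 2 * k)))) {0..1}"
    by (rule has_integral_eq[OF _ HI], rule eqf)
  ultimately have "(\<Sum>k\<le>n. real ((n - k) choose k) / B * Beta (a + real k) (b + real (n - 2 * k)))
      = integral {0..1} g1 + (-1) ^ (n + 2) * integral {0..1} g2"
    using has_integral_unique by blast
  then show ?thesis unfolding LHS
    using L1 L2 unfolding g1_def g2_def by (simp add: field_simps)
qed

end
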